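(* Let $m,n$ be integers of opposite parity, and let $M'_1=2m-n$, $N'_1=m+2n$, $v=(M'_1,N'_1)$, $w=(-N'_1,M'_1)$ and $c=(v+w)/2$. For $k=1,2,3,4$ let $G'_2(k)$ be the group of plane isometries generated by the translations in the lattice $L_k$ and the quarter turn about $c$, where $L_1=\mathbb{Z}v+\mathbb{Z}w$, $L_2=\mathbb{Z}(v+w)+\mathbb{Z}(v-w)$, $L_3=2L_1$, $L_4=2L_2$. Let $G_2$ be the isometry group of the $(5,3)$ satin with $M_1=2$, $N_1=1$, namely the group generated by the translations in the lattice $\mathbb{Z}(2,1)+\mathbb{Z}(-1,2)$ and the quarter turn about the origin. Then $G'_2(k)$ is a subgroup of $G_2$ for each $k=1,2,3,4$.
   Context: The groups are the isometry groups (type $p4$) attached to square lattice units: a level-1 lattice unit is the square with corners $0$, $v$, $v+w$, $w$ (quarter-turn centres at corners and centre, half-turn centres at mid-sides); the level-2 unit is the square with the same centre escribing it (side vectors $v+w$, $v-w$); levels 3 and 4 are the level-1 and level-2 units doubled in size about the same centre. The level-1 unit of the $(5,3)$ satin's isometry group is the square on side vectors $(2,1)$ and $(-1,2)$ with a corner at the origin, and the larger lattice unit based on $(M'_1,N'_1)$ is placed with its first corner at the origin, a corner of the satin's lattice units. *)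

theory Defs
  imports Complex_Main "HOL-Algebra.Bij" "HOL-Algebra.Generated_Groups"
begin

text \<open>The Euclidean plane is identified with the complex numbers: (x,y) = x + i y.\<close>

definition transl :: "complex \<Rightarrow> complex \<Rightarrow> complex" where
  "transl t = (\<lambda>z. z + t)"

definition qturn :: "complex \<Rightarrow> complex \<Rightarrow> complex" where
  "qturn c = (\<lambda>z. c + \<i> * (z - c))"

definition lattice :: "complex \<Rightarrow> complex \<Rightarrow> complex set" where
  "lattice a b = {of_int p * a + of_int q * b | p q. True}"

abbreviation PlaneBij :: "(complex \<Rightarrow> complex) monoid" where
  "PlaneBij \<equiv> BijGroup (UNIV :: complex set)"

definition iso_group :: "complex set \<Rightarrow> complex \<Rightarrow> (complex \<Rightarrow> complex) set" where
  "iso_group L c = generate PlaneBij (transl ` L \<union> {qturn c})"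

end

theory Submission
  imports Defs
begin

lemma transl_Bij: "transl t \<in> carrier PlaneBij"
proof -
  have "bij (transl t)"
    by (rule bij_betw_byWitness[where f'="transl (-t)"]) (auto simp: transl_def)
  thus ?thesis by (simp add: BijGroup_def Bij_def)
qed

lemma qturn_Bij: "qturn c \<in> carrier PlaneBij"
proof -
  have "bij (qturn c)"
    by (rule bij_betw_byWitness[where f'="\<lambda>z. c - \<i> * (z - c)"])
       (auto simp: qturn_def algebra_simps)
  thus ?thesis by (simp add: BijGroup_def Bij_def)
qed

lemma lat_mem: "of_int p * a + of_int q * b \<in> lattice a b"
  unfolding lattice_def by blast

lemma lat_sub:
  assumes "a \<in> lattice e f" "b \<in> lattice e f"
  shows "lattice a b \<subseteq> lattice e f"
proof
  fix z assume "z \<in> lattice a b"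
  then obtain p q where z: "z = of_int p * a + of_int q * b" unfolding lattice_def by blast
  obtain P1 Q1 where a: "a = of_int P1 * e + of_int Q1 * f" using assms(1) unfolding lattice_def by blast
  obtain P2 Q2 where b: "b = of_int P2 * e + of_int Q2 * f" using assms(2) unfolding lattice_def by blast
  have "z = of_int (p*P1 + q*P2) * e + of_int (p*Q1 + q*Q2) * f"
    unfolding z a b by (simp add: algebra_simps)
  thus "z \<in> lattice e f" using lat_mem by metis
qed

lemma lat_add:
  assumes "a \<in> lattice e f" "b \<in> lattice e f"
  shows "a + b \<in> lattice e f" "a - b \<in> lattice e f" "2 * a \<in> lattice e f"
proof -
  have "a + b = of_int 1 * a + of_int 1 * b" "a - b = of_int 1 * a + of_int (-1) * b"
    "2 * a = of_int 2 * a + of_int 0 * b" by simp_all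
  thus "a + b \<in> lattice e f" "a - b \<in> lattice e f" "2 * a \<in> lattice e f"
    using lat_sub[OF assms] lat_mem by (metis subsetD)+
qed

theorem theorem3:
  fixes m n :: int
  assumes "odd (m + n)"
  defines "v \<equiv> Complex (of_int (2*m - n)) (of_int (m + 2*n))"
      and "w \<equiv> Complex (- of_int (m + 2*n)) (of_int (2*m - n))"
  defines "c \<equiv> (v + w) / 2"
  defines "L \<equiv> (\<lambda>k::nat. if k = 1 then lattice v w
                       else if k = 2 then lattice (v + w) (v - w)
                       else if k = 3 then lattice (2*v) (2*w)
                       else lattice (2*(v + w)) (2*(v - w)))"
  defines "G2 \<equiv> iso_group (lattice (Complex 2 1) (Complex (-1) 2)) 0"
  shows "\<forall>k\<in>{1,2,3,4::nat}. subgroup (iso_group (L k) c) (PlaneBij\<lparr>carrier := G2\<rparr>)"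
proof -
  define \<Lambda> where "\<Lambda> = lattice (Complex 2 1) (Complex (-1) 2)"
  interpret grp: group PlaneBij by (rule group_BijGroup)
  have S2: "transl ` \<Lambda> \<union> {qturn 0} \<subseteq> carrier PlaneBij"
    using transl_Bij qturn_Bij by blast
  have sgG2: "subgroup G2 PlaneBij"
    unfolding G2_def iso_group_def \<Lambda>_def[symmetric] by (rule grp.generate_is_subgroup[OF S2])
  have vL: "v \<in> \<Lambda>"
  proof -
    have "v = of_int m * Complex 2 1 + of_int n * Complex (-1) 2"
      by (simp add: v_def complex_eq_iff)
    thus ?thesis unfolding \<Lambda>_def using lat_mem by metis
  qed
  have wL: "w \<in> \<Lambda>"
  proof -
    have "w = of_int (-n) * Complex 2 1 + of_int m * Complex (-1) 2"
      by (simp add: w_def complex_eq_iff)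
    thus ?thesis unfolding \<Lambda>_def using lat_mem by metis
  qed
  have Lsub: "L k \<subseteq> \<Lambda>" for k
  proof -
    have "2*(v+w) \<in> \<Lambda>" "2*(v-w) \<in> \<Lambda>" "v+w \<in> \<Lambda>" "v-w \<in> \<Lambda>" "2*v \<in> \<Lambda>" "2*w \<in> \<Lambda>"
      using vL wL unfolding \<Lambda>_def by (meson lat_add)+
    thus ?thesis unfolding L_def using vL wL unfolding \<Lambda>_def
      by (simp add: lat_sub)
  qed
  have inG2: "x \<in> G2" if "x \<in> transl ` \<Lambda> \<union> {qturn 0}" for x
    using that unfolding G2_def iso_group_def \<Lambda>_def[symmetric] by (rule generate.incl)
  have qc: "qturn c = transl v \<otimes>\<^bsub>PlaneBij\<^esub> qturn 0"
  proof -
    have "c + \<i> * (z - c) = \<i> * z + v" for z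
      unfolding c_def by (simp add: v_def w_def complex_eq_iff algebra_simps, simp add: field_simps)
    moreover have "transl v \<in> Bij UNIV" "qturn 0 \<in> Bij UNIV"
      using transl_Bij qturn_Bij by (simp_all add: BijGroup_def)
    ultimately show ?thesis
      by (simp add: BijGroup_def compose_def) (simp add: qturn_def transl_def restrict_def)
  qed
  have qcG2: "qturn c \<in> G2"
    unfolding qc using inG2 vL subgroup.m_closed[OF sgG2] by blast
  show ?thesis
  proof
    fix k :: nat assume "k \<in> {1,2,3,4}"
    have T: "transl ` L k \<union> {qturn c} \<subseteq> G2"
      using Lsub inG2 qcG2 by blast
    have T2: "transl ` L k \<union> {qturn c} \<subseteq> carrier PlaneBij"
      using transl_Bij qturn_Bij by blast
    show "subgroup (iso_group (L k) c) (PlaneBij\<lparr>carrier := G2\<rparr>)"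
      unfolding iso_group_def
      by (rule grp.subgroup_incl[OF grp.generate_is_subgroup[OF T2] sgG2
            grp.generate_subgroup_incl[OF T sgG2]])
  qed
qed

end
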